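(* For arbitrary qubit density matrices $\rho,\sigma$ (i.e. positive semidefinite $2\times 2$ complex matrices of unit trace), $$\frac{\operatorname{tr}(\rho\sigma)}{\max[\operatorname{tr}(\rho^{2}),\operatorname{tr}(\sigma^{2})]}\;\le\;\left(\operatorname{tr}\sqrt{\sqrt{\rho}\,\sigma\sqrt{\rho}}\right)^{2},$$ i.e. $\mathcal{F}_2(\rho,\sigma)\le\mathcal{F}_1(\rho,\sigma)$.
   Context: $\mathcal{F}_2(\rho,\sigma)=\operatorname{tr}(\rho\sigma)/\max[\operatorname{tr}(\rho^2),\operatorname{tr}(\sigma^2)]$ is the Hilbert–Schmidt fidelity and $\mathcal{F}_1(\rho,\sigma)=(\operatorname{tr}\sqrt{\sqrt{\rho}\sigma\sqrt{\rho}})^2$ is the Uhlmann–Jozsa fidelity; square roots of positive semidefinite matrices are the positive semidefinite square roots. *)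

theory Defs
  imports "HOL-Analysis.Analysis"
begin

text \<open>Qubit (2x2 complex) matrices are represented as complex^2^2.\<close>

definition cadj :: "complex^'n^'n \<Rightarrow> complex^'n^'n" where
  "cadj A = (\<chi> i j. cnj (A $ j $ i))"

definition hermitian :: "complex^'n^'n \<Rightarrow> bool" where
  "hermitian A \<longleftrightarrow> cadj A = A"

definition psd :: "complex^'n^'n \<Rightarrow> bool" where
  "psd A \<longleftrightarrow> hermitian A \<and>
     (\<forall>v::complex^'n. Im (\<Sum>i\<in>UNIV. \<Sum>j\<in>UNIV. cnj (v $ i) * A $ i $ j * v $ j) = 0 \<and>
                       Re (\<Sum>i\<in>UNIV. \<Sum>j\<in>UNIV. cnj (v $ i) * A $ i $ j * v $ j) \<ge> 0)"

definition psd_sqrt :: "complex^'n^'n \<Rightarrow> complex^'n^'n" where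
  "psd_sqrt A = (THE B. psd B \<and> B ** B = A)"

definition density_matrix :: "complex^'n^'n \<Rightarrow> bool" where
  "density_matrix A \<longleftrightarrow> psd A \<and> trace A = 1"

text \<open>Hilbert-Schmidt fidelity F2; all traces involved are real for Hermitian matrices.\<close>
definition fidelity_HS :: "complex^'n^'n \<Rightarrow> complex^'n^'n \<Rightarrow> real" where
  "fidelity_HS \<rho> \<sigma> = Re (trace (\<rho> ** \<sigma>)) / max (Re (trace (\<rho> ** \<rho>))) (Re (trace (\<sigma> ** \<sigma>)))"

definition fidelity_UJ :: "complex^'n^'n \<Rightarrow> complex^'n^'n \<Rightarrow> real" where
  "fidelity_UJ \<rho> \<sigma> = (Re (trace (psd_sqrt (psd_sqrt \<rho> ** \<sigma> ** psd_sqrt \<rho>))))\<^sup>2"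

end

theory Submission
  imports Defs
begin

lemma qf2: "(\<Sum>i\<in>UNIV. \<Sum>j\<in>UNIV. cnj (v $ i) * A $ i $ j * v $ j) =
   cnj (v$1) * A$1$1 * v$1 + cnj (v$1) * A$1$2 * v$2 + cnj (v$2) * A$2$1 * v$1 + cnj (v$2) * A$2$2 * v$2"
  for A :: "complex^2^2" by (simp add: sum_2)
lemma mat2_eq: "(A::'a^2^2) = B \<longleftrightarrow> A$1$1 = B$1$1 \<and> A$1$2 = B$1$2 \<and> A$2$1 = B$2$1 \<and> A$2$2 = B$2$2"
  by (auto simp: vec_eq_iff forall_2)
lemma herm2: "hermitian (A::complex^2^2) \<longleftrightarrow> A$1$1 = of_real (Re (A$1$1)) \<and> A$2$2 = of_real (Re (A$2$2)) \<and> A$2$1 = cnj (A$1$2)"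
  unfolding hermitian_def cadj_def mat2_eq by (auto simp: complex_eq_iff)

lemma qf_abs: "cnj a * of_real p * a + cnj a * z * b + cnj b * cnj z * a + cnj b * of_real q * b =
   (of_real (p * (cmod a)\<^sup>2 + q * (cmod b)\<^sup>2 + 2 * Re (cnj a * z * b)) :: complex)"
  apply (simp add: complex_eq_iff cmod_power2) by (simp add: power2_eq_square algebra_simps)

definition H :: "real \<Rightarrow> real \<Rightarrow> complex \<Rightarrow> complex^2^2" where
  "H p q z = vector [vector [of_real p, z], vector [cnj z, of_real q]]"

lemma H_simps [simp]: "H p q z $ 1 $ 1 = of_real p" "H p q z $ 1 $ 2 = z" "H p q z $ 2 $ 1 = cnj z" "H p q z $ 2 $ 2 = of_real q"
  by (simp_all add: H_def)

lemma H_herm: "hermitian (H p q z)"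
  unfolding herm2 by simp

lemma herm_H: "hermitian A \<Longrightarrow> A = H (Re (A$1$1)) (Re (A$2$2)) (A$1$2)"
  unfolding herm2 mat2_eq by simp

lemma H_eq: "H p q z = H p' q' z' \<longleftrightarrow> p = p' \<and> q = q' \<and> z = z'"
  unfolding mat2_eq by auto

lemma qf_H: "(\<Sum>i\<in>UNIV. \<Sum>j\<in>UNIV. cnj (v $ i) * H p q z $ i $ j * v $ j) =
    of_real (p * (cmod (v$1))\<^sup>2 + q * (cmod (v$2))\<^sup>2 + 2 * Re (cnj (v$1) * z * v$2))"
  unfolding qf2 H_simps by (rule qf_abs)

lemma psd_H_iff: "psd (H p q z) \<longleftrightarrow> (\<forall>a b. 0 \<le> p * (cmod a)\<^sup>2 + q * (cmod b)\<^sup>2 + 2 * Re (cnj a * z * b))"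
proof -
  have "psd (H p q z) \<longleftrightarrow> (\<forall>v::complex^2. 0 \<le> p * (cmod (v$1))\<^sup>2 + q * (cmod (v$2))\<^sup>2 + 2 * Re (cnj (v$1) * z * v$2))"
    unfolding psd_def qf_H using H_herm by simp
  also have "\<dots> \<longleftrightarrow> (\<forall>a b. 0 \<le> p * (cmod a)\<^sup>2 + q * (cmod b)\<^sup>2 + 2 * Re (cnj a * z * b))"
  proof
    assume "\<forall>v::complex^2. 0 \<le> p * (cmod (v$1))\<^sup>2 + q * (cmod (v$2))\<^sup>2 + 2 * Re (cnj (v$1) * z * v$2)"
    then show "\<forall>a b. 0 \<le> p * (cmod a)\<^sup>2 + q * (cmod b)\<^sup>2 + 2 * Re (cnj a * z * b)"
      by (metis vector_2)
  qed blast
  finally show ?thesis .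
qed

lemma psd_H_intro:
  assumes "p \<ge> 0" "q \<ge> 0" "(cmod z)\<^sup>2 \<le> p * q"
  shows "psd (H p q z)"
  unfolding psd_H_iff
proof (intro allI)
  fix a b :: complex
  define c where "c = cmod z"
  define X where "X = cmod a"
  define Y where "Y = cmod b"
  have X: "X \<ge> 0" "Y \<ge> 0" "c \<ge> 0" by (auto simp: X_def Y_def c_def)
  have "\<bar>Re (cnj a * z * b)\<bar> \<le> cmod (cnj a * z * b)" by (rule abs_Re_le_cmod)
  also have "\<dots> = X * c * Y" by (simp add: norm_mult X_def Y_def c_def)
  finally have b: "\<bar>Re (cnj a * z * b)\<bar> \<le> X * c * Y" .
  have "2 * (X * c * Y) \<le> p * X\<^sup>2 + q * Y\<^sup>2"
  proof (cases "p = 0")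
    case True
    then have "c\<^sup>2 \<le> 0" using assms(3) unfolding c_def by simp
    then have "c = 0" by simp
    then show ?thesis using assms(1,2) True by simp
  next
    case False
    then have pp: "p > 0" using assms(1) by simp
    have "p * (p * X\<^sup>2 + q * Y\<^sup>2 - 2 * (X * c * Y)) = (p*X - c*Y)\<^sup>2 + (p*q - c\<^sup>2) * Y\<^sup>2"
      by (simp add: power2_eq_square algebra_simps)
    also have "\<dots> \<ge> 0" using assms(3) unfolding c_def by (intro add_nonneg_nonneg) auto
    finally show ?thesis using pp by (simp add: zero_le_mult_iff)
  qed
  then show "0 \<le> p * (cmod a)\<^sup>2 + q * (cmod b)\<^sup>2 + 2 * Re (cnj a * z * b)"
    using b unfolding X_def[symmetric] Y_def[symmetric] by linarith
qed

lemma psd_H_elim: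
  assumes "psd (H p q z)"
  shows "p \<ge> 0" "q \<ge> 0" "(cmod z)\<^sup>2 \<le> p * q"
proof -
  have Qv: "0 \<le> p * (cmod a)\<^sup>2 + q * (cmod b)\<^sup>2 + 2 * Re (cnj a * z * b)" for a b
    using assms unfolding psd_H_iff by blast
  show p0: "p \<ge> 0" using Qv[of 1 0] by simp
  show q0: "q \<ge> 0" using Qv[of 0 1] by simp
  have e1: "Re (cnj (- z) * z * of_real p) = - p * (cmod z)\<^sup>2"
    apply (simp add: cmod_power2) by (simp add: power2_eq_square algebra_simps)
  have e2: "Re (cnj (of_real q) * z * (- cnj z)) = - q * (cmod z)\<^sup>2"
    apply (simp add: cmod_power2) by (simp add: power2_eq_square algebra_simps)
  have e3: "Re (cnj 1 * z * (- cnj z)) = - (cmod z)\<^sup>2"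
    apply (simp add: cmod_power2) by (simp add: power2_eq_square algebra_simps)
  have d1: "0 \<le> p * (p * q - (cmod z)\<^sup>2)"
    using Qv[of "- z" "of_real p"] unfolding e1 by (simp add: power2_eq_square algebra_simps)
  have d2: "0 \<le> q * (p * q - (cmod z)\<^sup>2)"
    using Qv[of "of_real q" "- cnj z"] unfolding e2 by (simp add: power2_eq_square algebra_simps)
  have d3: "cmod z = 0" if "p = 0" "q = 0"
  proof -
    have "0 \<le> - (cmod z)\<^sup>2" using Qv[of 1 "- cnj z"] that unfolding e3 by simp
    then have "(cmod z)\<^sup>2 \<le> 0" by linarith
    then show "cmod z = 0" using power2_less_eq_zero_iff by blast
  qed
  show "(cmod z)\<^sup>2 \<le> p * q"
  proof (rule ccontr)
    assume n: "\<not> ?thesis"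
    then have neg: "p * q - (cmod z)\<^sup>2 < 0" by simp
    have "p = 0"
    proof (rule ccontr)
      assume "p \<noteq> 0" then have "p > 0" using p0 by linarith
      then have "p * (p * q - (cmod z)\<^sup>2) < 0" using neg by (rule mult_pos_neg)
      then show False using d1 by linarith
    qed
    moreover have "q = 0"
    proof (rule ccontr)
      assume "q \<noteq> 0" then have "q > 0" using q0 by linarith
      then have "q * (p * q - (cmod z)\<^sup>2) < 0" using neg by (rule mult_pos_neg)
      then show False using d2 by linarith
    qed
    ultimately show False using d3 n by simp
  qed
qed

lemma psd_H: "psd (H p q z) \<longleftrightarrow> p \<ge> 0 \<and> q \<ge> 0 \<and> (cmod z)\<^sup>2 \<le> p * q"
  using psd_H_intro psd_H_elim by blast

lemma psd_herm: "psd A \<Longrightarrow> hermitian A"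
  unfolding psd_def by blast

lemma H_sq: "H p q z ** H p q z = H (p\<^sup>2 + (cmod z)\<^sup>2) (q\<^sup>2 + (cmod z)\<^sup>2) (of_real (p + q) * z)"
  unfolding mat2_eq matrix_matrix_mult_def
  apply (simp add: sum_2 complex_eq_iff cmod_power2)
  by (simp add: power2_eq_square algebra_simps)

lemma det_H: "det (H p q z) = of_real (p * q - (cmod z)\<^sup>2)"
  unfolding det_2 apply (simp add: complex_eq_iff cmod_power2) by (simp add: power2_eq_square)

lemma trace_H: "trace (H p q z) = of_real (p + q)"
  unfolding trace_def by (simp add: sum_2)

lemma H_zero: "H 0 0 0 = 0"
  unfolding mat2_eq by simp



definition sqH :: "real \<Rightarrow> real \<Rightarrow> complex \<Rightarrow> complex^2^2" where
  "sqH p q z = (let s = sqrt (p * q - (cmod z)\<^sup>2); t = sqrt (p + q + 2 * s) in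
     if t = 0 then 0 else H ((p + s) / t) ((q + s) / t) (z / of_real t))"

lemma sqH_exists:
  assumes "p \<ge> 0" "q \<ge> 0" "(cmod z)\<^sup>2 \<le> p * q"
  shows "psd (sqH p q z) \<and> sqH p q z ** sqH p q z = H p q z"
proof -
  define s where "s = sqrt (p * q - (cmod z)\<^sup>2)"
  define t where "t = sqrt (p + q + 2 * s)"
  have s0: "s \<ge> 0" unfolding s_def using assms(3) by simp
  have ss: "s\<^sup>2 = p * q - (cmod z)\<^sup>2" unfolding s_def by (rule real_sqrt_pow2) (use assms(3) in linarith)
  have tt: "t\<^sup>2 = p + q + 2 * s" unfolding t_def using assms s0 by simp
  have t0: "t \<ge> 0" unfolding t_def using assms s0 by simp
  have R: "sqH p q z = (if t = 0 then 0 else H ((p + s) / t) ((q + s) / t) (z / of_real t))"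
    unfolding sqH_def s_def t_def Let_def by simp
  show ?thesis
  proof (cases "t = 0")
    case True
    then have "p + q + 2 * s = 0" using tt by simp
    then have "p = 0" "q = 0" using assms s0 by linarith+
    then have "z = 0" using assms(3) by simp
    then have "H p q z = 0" using \<open>p = 0\<close> \<open>q = 0\<close> H_zero by simp
    moreover have "psd (0::complex^2^2)" using psd_H_intro[of 0 0 0] H_zero by simp
    ultimately show ?thesis using R True by simp
  next
    case False
    then have tp: "t > 0" using t0 by simp
    have "psd (H ((p + s) / t) ((q + s) / t) (z / of_real t))"
    proof (rule psd_H_intro)
      show "0 \<le> (p + s) / t" "0 \<le> (q + s) / t" using assms s0 tp by auto
      have "(p + s) * (q + s) = p * q + (s * (p + q) + s * s)" by (simp add: algebra_simps)
      moreover have "0 \<le> s * (p + q) + s * s" using assms s0 by simp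
      ultimately have "(cmod z)\<^sup>2 \<le> (p + s) * (q + s)" using assms(3) by linarith
      then show "(cmod (z / of_real t))\<^sup>2 \<le> (p + s) / t * ((q + s) / t)"
        using tp by (simp add: norm_divide power_divide divide_right_mono power2_eq_square)
    qed
    moreover have "H ((p + s) / t) ((q + s) / t) (z / of_real t) ** H ((p + s) / t) ((q + s) / t) (z / of_real t) = H p q z"
      unfolding H_sq H_eq
    proof (intro conjI)
      have "(p + s)\<^sup>2 + (cmod z)\<^sup>2 = p * t\<^sup>2" unfolding tt using ss by (simp add: power2_eq_square algebra_simps)
      then show "((p + s) / t)\<^sup>2 + (cmod (z / of_real t))\<^sup>2 = p"
        using tp by (simp add: norm_divide power_divide field_simps)
      have "(q + s)\<^sup>2 + (cmod z)\<^sup>2 = q * t\<^sup>2" unfolding tt using ss by (simp add: power2_eq_square algebra_simps)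
      then show "((q + s) / t)\<^sup>2 + (cmod (z / of_real t))\<^sup>2 = q"
        using tp by (simp add: norm_divide power_divide field_simps)
      have "(p + s) / t + (q + s) / t = (p + q + 2 * s) / t" by (simp add: add_divide_distrib[symmetric])
      also have "\<dots> = t\<^sup>2 / t" by (simp add: tt)
      also have "\<dots> = t" using tp by (simp add: power2_eq_square)
      finally have "(p + s) / t + (q + s) / t = t" .
      then show "of_real ((p + s) / t + (q + s) / t) * (z / of_real t) = z"
        using tp by simp
    qed
    ultimately show ?thesis using R False by simp
  qed
qed

lemma sqH_unique:
  assumes B: "psd B" and BB: "B ** B = H p q z"
  shows "B = sqH p q z"
proof -
  define b1 where "b1 = Re (B$1$1)"
  define b2 where "b2 = Re (B$2$2)"
  define w where "w = B$1$2"
  have Bd: "B = H b1 b2 w" unfolding b1_def b2_def w_def using herm_H psd_herm B by blast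
  have b: "b1 \<ge> 0" "b2 \<ge> 0" "(cmod w)\<^sup>2 \<le> b1 * b2" using B unfolding Bd psd_H by auto
  define W where "W = (cmod w)\<^sup>2"
  have W0: "W \<ge> 0" unfolding W_def by simp
  have "H (b1\<^sup>2 + (cmod w)\<^sup>2) (b2\<^sup>2 + (cmod w)\<^sup>2) (of_real (b1 + b2) * w) = H p q z"
    using BB unfolding Bd H_sq .
  then have pqz: "p = b1\<^sup>2 + W" "q = b2\<^sup>2 + W" "z = of_real (b1 + b2) * w"
    unfolding H_eq W_def by auto
  have nb: "cmod (complex_of_real (b1 + b2)) = b1 + b2" using b by (simp del: of_real_add)
  have zz: "(cmod z)\<^sup>2 = (b1 + b2)\<^sup>2 * W"
    unfolding pqz W_def norm_mult nb by (simp add: power_mult_distrib)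
  have "p * q - (cmod z)\<^sup>2 = (b1 * b2 - W)\<^sup>2"
    unfolding zz unfolding pqz(1,2) by (simp add: power2_eq_square algebra_simps)
  then have s: "sqrt (p * q - (cmod z)\<^sup>2) = b1 * b2 - W"
    using b unfolding W_def by simp
  have "p + q + 2 * (b1 * b2 - W) = (b1 + b2)\<^sup>2"
    unfolding pqz by (simp add: power2_eq_square algebra_simps)
  then have t: "sqrt (p + q + 2 * (b1 * b2 - W)) = b1 + b2"
    using b by simp
  have R: "sqH p q z = (if b1 + b2 = 0 then 0 else H ((p + (b1 * b2 - W)) / (b1 + b2)) ((q + (b1 * b2 - W)) / (b1 + b2)) (z / of_real (b1 + b2)))"
    unfolding sqH_def Let_def t s ..
  show ?thesis
  proof (cases "b1 + b2 = 0")
    case True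
    then have "b1 = 0" "b2 = 0" using b by linarith+
    then have "w = 0" using b by simp
    then show ?thesis unfolding R Bd using True \<open>b1 = 0\<close> \<open>b2 = 0\<close> H_zero by simp
  next
    case False
    then have pos: "b1 + b2 > 0" using b by linarith
    have "(p + (b1 * b2 - W)) / (b1 + b2) = b1"
    proof -
      have "p + (b1 * b2 - W) = b1 * (b1 + b2)" unfolding pqz by (simp add: power2_eq_square algebra_simps)
      then show ?thesis using pos by simp
    qed
    moreover have "(q + (b1 * b2 - W)) / (b1 + b2) = b2"
    proof -
      have "q + (b1 * b2 - W) = b2 * (b1 + b2)" unfolding pqz by (simp add: power2_eq_square algebra_simps)
      then show ?thesis using pos by simp
    qed
    moreover have "z / of_real (b1 + b2) = w" unfolding pqz using pos
      by (metis nonzero_mult_div_cancel_left of_real_eq_0_iff less_irrefl)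
    ultimately show ?thesis unfolding R Bd using False by simp
  qed
qed

lemma trace_sqH:
  assumes "p \<ge> 0" "q \<ge> 0" "(cmod z)\<^sup>2 \<le> p * q"
  shows "Re (trace (sqH p q z)) = sqrt (p + q + 2 * sqrt (p * q - (cmod z)\<^sup>2))"
proof -
  define s where "s = sqrt (p * q - (cmod z)\<^sup>2)"
  define t where "t = sqrt (p + q + 2 * s)"
  have s0: "s \<ge> 0" unfolding s_def using assms(3) by simp
  have tt: "t\<^sup>2 = p + q + 2 * s" unfolding t_def using assms s0 by simp
  have t0: "t \<ge> 0" unfolding t_def using assms s0 by simp
  have R: "sqH p q z = (if t = 0 then 0 else H ((p + s) / t) ((q + s) / t) (z / of_real t))"
    unfolding sqH_def s_def t_def Let_def by simp
  show ?thesis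
  proof (cases "t = 0")
    case True
    then show ?thesis unfolding R s_def[symmetric] t_def[symmetric] by (simp add: trace_def)
  next
    case False
    then have tp: "t > 0" using t0 by simp
    have "(p + s) / t + (q + s) / t = (p + q + 2 * s) / t" by (simp add: add_divide_distrib[symmetric])
    also have "\<dots> = t\<^sup>2 / t" by (simp add: tt)
    also have "\<dots> = t" using tp by (simp add: power2_eq_square)
    finally have "(p + s) / t + (q + s) / t = t" .
    then show ?thesis unfolding R s_def[symmetric] t_def[symmetric] using False by (simp add: trace_H)
  qed
qed

lemma psd_sqrt_H:
  assumes "psd (H p q z)"
  shows "psd_sqrt (H p q z) = sqH p q z"
proof -
  have a: "p \<ge> 0" "q \<ge> 0" "(cmod z)\<^sup>2 \<le> p * q" using assms psd_H by auto
  show ?thesis unfolding psd_sqrt_def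
  proof (rule the_equality)
    show "psd (sqH p q z) \<and> sqH p q z ** sqH p q z = H p q z" using sqH_exists[OF a] .
  next
    fix B assume "psd B \<and> B ** B = H p q z"
    then show "B = sqH p q z" using sqH_unique by blast
  qed
qed



lemma cadj_mult: "cadj (A ** B) = cadj B ** cadj (A :: complex^'n^'n)"
  unfolding cadj_def matrix_matrix_mult_def
  by (simp add: vec_eq_iff cnj_sum mult.commute)

lemma herm_SAS: "hermitian S \<Longrightarrow> hermitian A \<Longrightarrow> hermitian (S ** A ** S)"
  unfolding hermitian_def by (simp add: cadj_mult matrix_mul_assoc)

lemma qf_SAS:
  fixes A :: "complex^2^2"
  assumes w: "w = vector [of_real a * v$1 + u * v$2, cnj u * v$1 + of_real b * v$2]"
  shows "(\<Sum>i\<in>UNIV. \<Sum>j\<in>UNIV. cnj (v $ i) * (H a b u ** A ** H a b u) $ i $ j * v $ j) =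
    (\<Sum>i\<in>UNIV. \<Sum>j\<in>UNIV. cnj (w $ i) * A $ i $ j * w $ j)"
  unfolding qf2 w matrix_matrix_mult_def
  by (simp add: sum_2 algebra_simps)

lemma psd_SAS:
  fixes S A :: "complex^2^2"
  assumes S: "psd S" and A: "psd A"
  shows "psd (S ** A ** S)"
proof -
  define a where "a = Re (S$1$1)"
  define b where "b = Re (S$2$2)"
  define u where "u = S$1$2"
  have Sd: "S = H a b u" unfolding a_def b_def u_def using herm_H psd_herm S by blast
  show ?thesis unfolding psd_def
  proof (intro conjI allI)
    show "hermitian (S ** A ** S)" using herm_SAS psd_herm S A by blast
  next
    fix v :: "complex^2"
    define w where "w = (vector [of_real a * v$1 + u * v$2, cnj u * v$1 + of_real b * v$2] :: complex^2)"
    have e: "(\<Sum>i\<in>UNIV. \<Sum>j\<in>UNIV. cnj (v $ i) * (S ** A ** S) $ i $ j * v $ j) =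
      (\<Sum>i\<in>UNIV. \<Sum>j\<in>UNIV. cnj (w $ i) * A $ i $ j * w $ j)"
      unfolding Sd by (rule qf_SAS[OF w_def])
    from A have "Im (\<Sum>i\<in>UNIV. \<Sum>j\<in>UNIV. cnj (w $ i) * A $ i $ j * w $ j) = 0 \<and>
        Re (\<Sum>i\<in>UNIV. \<Sum>j\<in>UNIV. cnj (w $ i) * A $ i $ j * w $ j) \<ge> 0"
      unfolding psd_def by blast
    then show "Im (\<Sum>i\<in>UNIV. \<Sum>j\<in>UNIV. cnj (v $ i) * (S ** A ** S) $ i $ j * v $ j) = 0"
      "Re (\<Sum>i\<in>UNIV. \<Sum>j\<in>UNIV. cnj (v $ i) * (S ** A ** S) $ i $ j * v $ j) \<ge> 0"
      unfolding e by auto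
  qed
qed

lemma sqrt_props:
  fixes A :: "complex^2^2"
  assumes "psd A"
  shows "psd (psd_sqrt A)" "psd_sqrt A ** psd_sqrt A = A"
    "(Re (trace (psd_sqrt A)))\<^sup>2 = Re (trace A) + 2 * sqrt (Re (det A))"
proof -
  define p where "p = Re (A$1$1)"
  define q where "q = Re (A$2$2)"
  define z where "z = A$1$2"
  have Ad: "A = H p q z" unfolding p_def q_def z_def using herm_H psd_herm assms by blast
  have c: "p \<ge> 0" "q \<ge> 0" "(cmod z)\<^sup>2 \<le> p * q" using assms unfolding Ad psd_H by auto
  have ps: "psd_sqrt A = sqH p q z" using assms Ad psd_sqrt_H by metis
  show "psd (psd_sqrt A)" "psd_sqrt A ** psd_sqrt A = A" unfolding ps using sqH_exists[OF c] Ad by auto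
  have s0: "sqrt (p * q - (cmod z)\<^sup>2) \<ge> 0" using c by simp
  have "(Re (trace (psd_sqrt A)))\<^sup>2 = p + q + 2 * sqrt (p * q - (cmod z)\<^sup>2)"
    unfolding ps trace_sqH[OF c] using c s0 by simp
  then show "(Re (trace (psd_sqrt A)))\<^sup>2 = Re (trace A) + 2 * sqrt (Re (det A))"
    unfolding Ad trace_H det_H by simp
qed



lemma final_real:
  fixes p1 q1 p2 q2 x1 y1 x2 y2 T :: real
  assumes "p1 \<ge> 0" "q1 \<ge> 0" "p2 \<ge> 0" "q2 \<ge> 0" "p1 + q1 = 1" "p2 + q2 = 1"
    "x1\<^sup>2 + y1\<^sup>2 \<le> p1 * q1" "x2\<^sup>2 + y2\<^sup>2 \<le> p2 * q2"
    and T: "T = p1 * p2 + q1 * q2 + 2 * (x1 * x2 + y1 * y2)" and T0: "T \<ge> 0"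
  shows "T / max (p1 * p1 + q1 * q1 + 2 * (x1 * x1 + y1 * y1)) (p2 * p2 + q2 * q2 + 2 * (x2 * x2 + y2 * y2))
      \<le> T + 2 * sqrt ((p1 * q1 - (x1\<^sup>2 + y1\<^sup>2)) * (p2 * q2 - (x2\<^sup>2 + y2\<^sup>2)))"
proof -
  define a where "a = p1 * q1 - (x1\<^sup>2 + y1\<^sup>2)"
  define b where "b = p2 * q2 - (x2\<^sup>2 + y2\<^sup>2)"
  have a0: "a \<ge> 0" "b \<ge> 0" using assms unfolding a_def b_def by auto
  have r1: "p1 * p1 + q1 * q1 + 2 * (x1 * x1 + y1 * y1) = 1 - 2 * a"
  proof -
    have "(p1 + q1) * (p1 + q1) = 1" using assms by simp
    then show ?thesis unfolding a_def by (simp add: power2_eq_square algebra_simps)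
  qed
  have r2: "p2 * p2 + q2 * q2 + 2 * (x2 * x2 + y2 * y2) = 1 - 2 * b"
  proof -
    have "(p2 + q2) * (p2 + q2) = 1" using assms by simp
    then show ?thesis unfolding b_def by (simp add: power2_eq_square algebra_simps)
  qed
  have "0 \<le> (p1 - q1)\<^sup>2" by simp
  moreover have "4 * (p1 * q1) = (p1 + q1)\<^sup>2 - (p1 - q1)\<^sup>2" by (simp add: power2_eq_square algebra_simps)
  ultimately have "4 * (p1 * q1) \<le> 1" using assms(5) by simp
  moreover have "x1\<^sup>2 + y1\<^sup>2 \<ge> 0" by simp
  ultimately have a4: "a \<le> 1/4" unfolding a_def by linarith
  have "0 \<le> (p1 - p2)\<^sup>2 + (q1 - q2)\<^sup>2 + 2 * (x1 - x2)\<^sup>2 + 2 * (y1 - y2)\<^sup>2" by simp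
  then have Tle: "2 * T \<le> (1 - 2 * a) + (1 - 2 * b)" unfolding T r1[symmetric] r2[symmetric]
    by (simp add: power2_eq_square algebra_simps)
  define c where "c = min a b"
  define m where "m = 1 - 2 * c"
  have mm: "max (1 - 2 * a) (1 - 2 * b) = m" unfolding m_def c_def by (simp add: max_def min_def)
  have c0: "c \<ge> 0" "c \<le> 1/4" using a0 a4 unfolding c_def by auto
  have mpos: "m > 0" unfolding m_def using c0 by simp
  have Tm: "T \<le> m" using Tle mm by (simp add: max_def split: if_splits)
  have "c * c \<le> a * b" unfolding c_def using a0 by (simp add: min_def mult_mono mult_left_mono mult.commute)
  then have cs: "c \<le> sqrt (a * b)" using c0 by (simp add: real_le_rsqrt power2_eq_square)
  have "m * c \<le> m * sqrt (a * b)" using cs mpos by simp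
  moreover have "c * T \<le> c * m" using Tm c0 by (simp add: mult_left_mono)
  ultimately have "T \<le> m * (T + 2 * sqrt (a * b))" unfolding m_def by (simp add: algebra_simps)
  then have "T / m \<le> T + 2 * sqrt (a * b)" using mpos by (simp add: pos_divide_le_eq mult.commute)
  then show ?thesis unfolding r1 r2 mm a_def[symmetric] b_def[symmetric] .
qed

lemma trace_HH: "Re (trace (H p1 q1 z1 ** H p2 q2 z2)) = p1 * p2 + q1 * q2 + 2 * (Re z1 * Re z2 + Im z1 * Im z2)"
  unfolding trace_def matrix_matrix_mult_def by (simp add: sum_2 algebra_simps)

theorem corollary1:
  fixes \<rho> \<sigma> :: "complex^2^2"
  assumes "density_matrix \<rho>" and "density_matrix \<sigma>"
  shows "fidelity_HS \<rho> \<sigma> \<le> fidelity_UJ \<rho> \<sigma>"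
proof -
  have P\<rho>: "psd \<rho>" and t\<rho>: "trace \<rho> = 1" using assms(1) unfolding density_matrix_def by auto
  have P\<sigma>: "psd \<sigma>" and t\<sigma>: "trace \<sigma> = 1" using assms(2) unfolding density_matrix_def by auto
  define p1 where "p1 = Re (\<rho>$1$1)"
  define q1 where "q1 = Re (\<rho>$2$2)"
  define z1 where "z1 = \<rho>$1$2"
  have R: "\<rho> = H p1 q1 z1" unfolding p1_def q1_def z1_def using herm_H psd_herm P\<rho> by blast
  define p2 where "p2 = Re (\<sigma>$1$1)"
  define q2 where "q2 = Re (\<sigma>$2$2)"
  define z2 where "z2 = \<sigma>$1$2"
  have S: "\<sigma> = H p2 q2 z2" unfolding p2_def q2_def z2_def using herm_H psd_herm P\<sigma> by blast
  have c1: "p1 \<ge> 0" "q1 \<ge> 0" "(cmod z1)\<^sup>2 \<le> p1 * q1" using P\<rho> unfolding R psd_H by auto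
  have c2: "p2 \<ge> 0" "q2 \<ge> 0" "(cmod z2)\<^sup>2 \<le> p2 * q2" using P\<sigma> unfolding S psd_H by auto
  have s1: "p1 + q1 = 1" using t\<rho> unfolding R trace_H by (metis of_real_eq_1_iff)
  have s2: "p2 + q2 = 1" using t\<sigma> unfolding S trace_H by (metis of_real_eq_1_iff)
  define Q where "Q = psd_sqrt \<rho>"
  have PQ: "psd Q" and QQ: "Q ** Q = \<rho>" unfolding Q_def using sqrt_props[OF P\<rho>] by auto
  define M where "M = Q ** \<sigma> ** Q"
  have PM: "psd M" unfolding M_def using psd_SAS PQ P\<sigma> by blast
  have trM: "trace M = trace (\<rho> ** \<sigma>)"
  proof -
    have "trace M = trace (Q ** (Q ** \<sigma>))" unfolding M_def by (rule trace_mul_sym)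
    also have "\<dots> = trace (\<rho> ** \<sigma>)" by (simp add: matrix_mul_assoc QQ)
    finally show ?thesis .
  qed
  have detM: "det M = det \<rho> * det \<sigma>"
  proof -
    have "det M = det Q * det \<sigma> * det Q" unfolding M_def by (simp add: det_mul)
    also have "\<dots> = det (Q ** Q) * det \<sigma>" by (simp add: det_mul)
    finally show ?thesis using QQ by simp
  qed
  have F1: "fidelity_UJ \<rho> \<sigma> = Re (trace M) + 2 * sqrt (Re (det M))"
    unfolding fidelity_UJ_def M_def[symmetric] Q_def[symmetric] using sqrt_props(3)[OF PM] .
  have dM: "Re (det M) = (p1 * q1 - ((Re z1)\<^sup>2 + (Im z1)\<^sup>2)) * (p2 * q2 - ((Re z2)\<^sup>2 + (Im z2)\<^sup>2))"
    unfolding detM R S det_H by (simp add: cmod_power2)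
  define T where "T = Re (trace (\<rho> ** \<sigma>))"
  have T: "T = p1 * p2 + q1 * q2 + 2 * (Re z1 * Re z2 + Im z1 * Im z2)"
    unfolding T_def R S trace_HH ..
  have T0: "T \<ge> 0"
  proof -
    define pm where "pm = Re (M$1$1)"
    define qm where "qm = Re (M$2$2)"
    define zm where "zm = M$1$2"
    have Md: "M = H pm qm zm" unfolding pm_def qm_def zm_def using herm_H psd_herm PM by blast
    have "pm \<ge> 0" "qm \<ge> 0" using PM unfolding Md psd_H by auto
    then show ?thesis unfolding T_def trM[symmetric] Md trace_H by simp
  qed
  have F2: "fidelity_HS \<rho> \<sigma> = T / max (p1 * p1 + q1 * q1 + 2 * (Re z1 * Re z1 + Im z1 * Im z1))
      (p2 * p2 + q2 * q2 + 2 * (Re z2 * Re z2 + Im z2 * Im z2))"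
    unfolding fidelity_HS_def T_def unfolding R S trace_HH ..
  have "fidelity_HS \<rho> \<sigma> \<le> T + 2 * sqrt (Re (det M))"
    unfolding F2 dM
    by (rule final_real[OF c1(1,2) c2(1,2) s1 s2 _ _ T T0])
       (use c1(3) c2(3) in \<open>simp_all add: cmod_power2\<close>)
  then show ?thesis unfolding F1 trM T_def .
qed

end
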